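(* Let $\eta>0$, $\widetilde{x}_1\in C$, and let $(\widehat{x}_t^* )_{t\ge 1}$ be an arbitrary sequence in $H$. Run Optimistic Greedy Projection (OGP): for $t=1,2,\dots$, $$\widetilde{x}_{t+1}=P_C(\widetilde{x}_t-\eta x_t^* ),\quad x_t^*\in\partial\varphi_t(x_t),\qquad x_{t+1}=P_C(\widetilde{x}_{t+1}-\eta\widehat{x}_{t+1}^* ),$$ where $x_1\in C$ is the initial played point ($x_1=P_C(\widetilde x_1-\eta\widehat x_1^* )$). Then for every $T\ge1$ and every reference sequence $z_1,\dots,z_T\in C$, $$\sum_{t=1}^T\varphi_t(x_t)-\sum_{t=1}^T\varphi_t(z_t)\le \frac{\rho^2}{2\eta}+\frac{\rho}{\eta}\sum_{t=2}^T\|z_t-z_{t-1}\|+\frac{\eta}{2}\sum_{t=1}^T\|x_t^*-\widehat{x}_t^*\|^2-\frac{1}{2\eta}\sum_{t=1}^T\|x_t-\widetilde{x}_t\|^2 .$$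
   Context: $H$ is a real Hilbert space with inner product $\langle\cdot,\cdot\rangle$; $C\subset H$ is nonempty, closed and convex with diameter $\rho=\sup_{x,y\in C}\|x-y\|<\infty$; $P_C$ denotes the metric projection onto $C$. For each round $t$, $\varphi_t:H\to(-\infty,+\infty]$ is a convex function with $C\subset\operatorname{dom}\partial\varphi_t$ (the loss chosen by an adversary, possibly depending on past play), and $\partial$ denotes the subdifferential. *)

theory Defs
  imports "HOL-Analysis.Analysis"
begin

text \<open>Metric projection onto C in a (possibly infinite-dimensional) real inner product
  space: a nearest point of C to a.  (The library's closest_point is restricted
  to heine_borel spaces, so we use the same definition for real_inner.)\<close>
definition metric_proj :: "'a::real_inner set \<Rightarrow> 'a \<Rightarrow> 'a" where
  "metric_proj C a = (SOME p. p \<in> C \<and> (\<forall>y\<in>C. dist a p \<le> dist a y))"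

definition ext_convex :: "('a::real_vector \<Rightarrow> ereal) \<Rightarrow> bool" where
  "ext_convex f \<longleftrightarrow> (\<forall>x. f x \<noteq> -\<infinity>) \<and>
     (\<forall>x y. \<forall>u::real. 0 < u \<and> u < 1 \<longrightarrow>
        f ((1 - u) *\<^sub>R x + u *\<^sub>R y) \<le> ereal (1 - u) * f x + ereal u * f y)"

definition subdiff :: "('a::real_inner \<Rightarrow> ereal) \<Rightarrow> 'a \<Rightarrow> 'a set" where
  "subdiff f x = {u. f x \<noteq> \<infinity> \<and> f x \<noteq> -\<infinity> \<and>
                     (\<forall>y. f x + ereal (inner u (y - x)) \<le> f y)}"

end

theory Submission imports Defs begin

lemma near_approx:
  fixes C :: "'a::real_inner set"
  assumes "C \<noteq> {}" "e > 0"
  shows "\<exists>y\<in>C. (dist a y)\<^sup>2 < (infdist a C)\<^sup>2 + e"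
proof -
  let ?d = "infdist a C"
  have "?d < sqrt (?d\<^sup>2 + e)"
    using assms(2) infdist_nonneg[of a C] by (smt (verit) real_less_rsqrt)
  then obtain y where y: "y \<in> C" "dist a y < sqrt (?d\<^sup>2 + e)"
    using assms(1) unfolding infdist_notempty[OF assms(1)]
    by (subst (asm) cINF_less_iff) (auto intro: bdd_belowI[where m=0])
  have "(dist a y)\<^sup>2 < (sqrt (?d\<^sup>2 + e))\<^sup>2"
    using y(2) by (intro power_strict_mono) auto
  also have "\<dots> = ?d\<^sup>2 + e" using assms(2) by simp
  finally show ?thesis using y(1) by blast
qed

lemma parallelogram:
  fixes u v :: "'a::real_inner"
  shows "(norm (u - v))\<^sup>2 = 2 * (norm u)\<^sup>2 + 2 * (norm v)\<^sup>2 - 4 * (norm ((1/2) *\<^sub>R (u + v)))\<^sup>2"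
  by (simp add: power2_norm_eq_inner inner_diff inner_add algebra_simps inner_commute)

lemma proj_exists:
  fixes C :: "'a::{real_inner,complete_space} set"
  assumes "C \<noteq> {}" "closed C" "convex C"
  shows "\<exists>p. p \<in> C \<and> (\<forall>y\<in>C. dist a p \<le> dist a y)"
proof -
  let ?d = "infdist a C"
  have "\<forall>n. \<exists>y\<in>C. (dist a y)\<^sup>2 < ?d\<^sup>2 + 1 / real (Suc n)"
    using near_approx[OF assms(1)] by simp
  then obtain c where c: "\<And>n. c n \<in> C" "\<And>n. (dist a (c n))\<^sup>2 < ?d\<^sup>2 + 1 / real (Suc n)"
    by metis
  have lb: "?d \<le> dist a y" if "y \<in> C" for y using infdist_le[OF that] .
  have key: "(norm (c m - c n))\<^sup>2 \<le> 2 / real (Suc m) + 2 / real (Suc n)" for m n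
  proof -
    have mid: "(1/2) *\<^sub>R (c m + c n) \<in> C"
      using assms(3) c(1)[of m] c(1)[of n] unfolding convex_def
      by (metis (no_types, lifting) add_diff_cancel_left' diff_add_cancel le_divide_eq_1_pos
          less_eq_real_def scaleR_add_right zero_less_divide_1_iff zero_less_numeral
          one_add_one field_sum_of_halves)
    have "?d \<le> dist a ((1/2) *\<^sub>R (c m + c n))" by (rule lb[OF mid])
    moreover have eq: "(1/2) *\<^sub>R ((a - c m) + (a - c n)) = a - (1/2) *\<^sub>R (c m + c n)"
    proof -
      have "(a - c m) + (a - c n) = 2 *\<^sub>R a - (c m + c n)" by (simp add: scaleR_2 algebra_simps)
      hence "(1/2) *\<^sub>R ((a - c m) + (a - c n)) = (1/2) *\<^sub>R (2 *\<^sub>R a) - (1/2) *\<^sub>R (c m + c n)"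
        by (simp only: scaleR_diff_right)
      thus ?thesis by simp
    qed
    ultimately have h: "?d\<^sup>2 \<le> (norm ((1/2) *\<^sub>R ((a - c m) + (a - c n))))\<^sup>2"
      using infdist_nonneg[of a C]
      by (simp only: eq dist_norm) (rule power_mono)
    have "c m - c n = (a - c n) - (a - c m)" by simp
    hence "(norm (c m - c n))\<^sup>2 = 2 * (norm (a - c n))\<^sup>2 + 2 * (norm (a - c m))\<^sup>2
        - 4 * (norm ((1/2) *\<^sub>R ((a - c m) + (a - c n))))\<^sup>2"
      using parallelogram[of "a - c n" "a - c m"] by (simp add: add.commute)
    then show ?thesis using c(2)[of m] c(2)[of n] h by (simp add: dist_norm)
  qed
  have "Cauchy c"
  proof (rule CauchyI)
    fix e :: real assume e: "e > 0"
    obtain M :: nat where M: "4 / e\<^sup>2 < real M" using reals_Archimedean2 by blast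
    show "\<exists>M. \<forall>m\<ge>M. \<forall>n\<ge>M. norm (c m - c n) < e"
    proof (intro exI allI impI)
      fix m n assume mn: "M \<le> m" "M \<le> n"
      have "2 / real (Suc m) < e\<^sup>2 / 2"
      proof -
        have "4 / e\<^sup>2 < real (Suc m)" using M mn by simp
        thus ?thesis using e by (simp add: field_simps)
      qed
      moreover have "2 / real (Suc n) < e\<^sup>2 / 2"
      proof -
        have "4 / e\<^sup>2 < real (Suc n)" using M mn by simp
        thus ?thesis using e by (simp add: field_simps)
      qed
      ultimately have "(norm (c m - c n))\<^sup>2 < e\<^sup>2" using key[of m n] by simp
      thus "norm (c m - c n) < e" using e by (simp add: power_less_imp_less_base)
    qed
  qed
  then obtain p where p: "c \<longlonglongrightarrow> p" using convergent_eq_Cauchy by blast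
  have pC: "p \<in> C" using closed_sequentially[OF assms(2)] c(1) p by blast
  have "(\<lambda>n. (dist a (c n))\<^sup>2) \<longlonglongrightarrow> (dist a p)\<^sup>2"
    by (intro tendsto_intros p)
  moreover have "(\<lambda>n. ?d\<^sup>2 + 1 / real (Suc n)) \<longlonglongrightarrow> ?d\<^sup>2 + 0"
    by (intro tendsto_intros LIMSEQ_inverse_real_of_nat[unfolded inverse_eq_divide])
  ultimately have "(dist a p)\<^sup>2 \<le> ?d\<^sup>2 + 0"
    by (rule LIMSEQ_le) (use c(2) less_imp_le in blast)
  hence "dist a p \<le> ?d"
    using infdist_nonneg[of a C] by (simp add: power2_le_iff_abs_le)
  thus ?thesis using pC lb by (meson order_trans)
qed


lemma proj_char:
  fixes C :: "'a::{real_inner,complete_space} set"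
  assumes "C \<noteq> {}" "closed C" "convex C"
  shows "metric_proj C a \<in> C \<and> (\<forall>u\<in>C. inner (a - metric_proj C a) (u - metric_proj C a) \<le> 0)"
proof -
  let ?p = "metric_proj C a"
  have P: "?p \<in> C \<and> (\<forall>y\<in>C. dist a ?p \<le> dist a y)"
    unfolding metric_proj_def using proj_exists[OF assms] by (rule someI_ex)
  have "inner (a - ?p) (u - ?p) \<le> 0" if u: "u \<in> C" for u
  proof (rule ccontr)
    assume "\<not> ?thesis"
    hence s: "inner (a - ?p) (u - ?p) > 0" by simp
    let ?s = "inner (a - ?p) (u - ?p)"
    have un: "u \<noteq> ?p" using s by auto
    let ?N = "(norm (u - ?p))\<^sup>2"
    have N: "?N > 0" using un by simp
    define t where "t = min 1 (?s / ?N)"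
    have t0: "t > 0" using s N by (simp add: t_def)
    have t1: "t \<le> 1" by (simp add: t_def)
    have tN: "t * ?N \<le> ?s" using N by (simp add: t_def min_def field_simps)
    have qC: "?p + t *\<^sub>R (u - ?p) \<in> C"
    proof -
      have "(1 - t) *\<^sub>R ?p + t *\<^sub>R u \<in> C"
        using assms(3) P u t0 t1 unfolding convex_def by simp
      moreover have "(1 - t) *\<^sub>R ?p + t *\<^sub>R u = ?p + t *\<^sub>R (u - ?p)"
        by (simp add: algebra_simps)
      ultimately show ?thesis by simp
    qed
    have "dist a ?p \<le> dist a (?p + t *\<^sub>R (u - ?p))" using P qC by blast
    hence "(norm (a - ?p))\<^sup>2 \<le> (norm ((a - ?p) - t *\<^sub>R (u - ?p)))\<^sup>2"
      by (simp add: dist_norm power_mono algebra_simps)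
    also have "\<dots> = (norm (a - ?p))\<^sup>2 - 2 * t * ?s + t * (t * ?N)"
      by (simp add: power2_norm_eq_inner inner_diff_left inner_diff_right inner_commute algebra_simps)
    finally have "2 * t * ?s \<le> t * (t * ?N)" by simp
    hence "2 * ?s \<le> t * ?N" using t0 by (simp add: mult.assoc)
    with tN s show False by simp
  qed
  with P show ?thesis by blast
qed

lemma step_ineq0:
  fixes y y' x z G M :: "'a::real_inner"
  assumes A: "inner ((y - G) - y') (z - y') \<le> 0"
    and B: "inner ((y - M) - x) (y' - x) \<le> 0"
  shows "inner G (x - z) \<le> ((norm (y - z))\<^sup>2 - (norm (y' - z))\<^sup>2) / 2
           + (norm (G - M))\<^sup>2 / 2 - (norm (x - y))\<^sup>2 / 2"
proof -
  let ?v = "(G - M) - (x - y')"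
  have Cc: "0 \<le> inner ?v ?v" by simp
  show ?thesis using A B Cc
    unfolding power2_norm_eq_inner
    by (simp add: inner_diff_left inner_diff_right inner_commute algebra_simps) (simp add: field_simps)
qed

lemma step_ineq:
  fixes y y' x z g m :: "'a::real_inner"
  assumes eta: "\<eta> > 0"
    and A: "inner ((y - \<eta> *\<^sub>R g) - y') (z - y') \<le> 0"
    and B: "inner ((y - \<eta> *\<^sub>R m) - x) (y' - x) \<le> 0"
  shows "\<eta> * inner g (x - z) \<le> ((norm (y - z))\<^sup>2 - (norm (y' - z))\<^sup>2) / 2
           + \<eta>\<^sup>2 / 2 * (norm (g - m))\<^sup>2 - (norm (x - y))\<^sup>2 / 2"
proof -
  have "norm (\<eta> *\<^sub>R g - \<eta> *\<^sub>R m) = \<eta> * norm (g - m)"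
    using eta by (simp add: scaleR_diff_right[symmetric])
  thus ?thesis using step_ineq0[OF A B] by (simp add: power_mult_distrib)
qed


lemma sqdiff:
  fixes a b r d :: real
  assumes "0 \<le> a" "0 \<le> b" "a \<le> r" "b \<le> r" "a - b \<le> d" "0 \<le> d"
  shows "a\<^sup>2 - b\<^sup>2 \<le> 2 * r * d"
proof (cases "a \<le> b")
  case True
  hence "a\<^sup>2 \<le> b\<^sup>2" using assms by (simp add: power_mono)
  moreover have "0 \<le> 2 * r * d" using assms by simp
  ultimately show ?thesis by linarith
next
  case False
  have "a\<^sup>2 - b\<^sup>2 = (a - b) * (a + b)" by (simp add: power2_eq_square algebra_simps)
  also have "\<dots> \<le> d * (2 * r)"
    using False assms by (intro mult_mono) auto
  finally show ?thesis by (simp add: mult.commute mult.left_commute)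
qed

theorem lemma1:
  fixes C :: "'a::{real_inner, complete_space} set"
    and \<phi> :: "nat \<Rightarrow> 'a \<Rightarrow> ereal"
    and \<eta> :: real
    and xt x xs xh :: "nat \<Rightarrow> 'a"
    and z :: "nat \<Rightarrow> 'a"
    and T :: nat
  assumes "C \<noteq> {}" "closed C" "convex C" "bounded C"
    and "\<And>t. t \<ge> 1 \<Longrightarrow> ext_convex (\<phi> t)"
    and "\<And>t y. t \<ge> 1 \<Longrightarrow> y \<in> C \<Longrightarrow> subdiff (\<phi> t) y \<noteq> {}"
    and "\<eta> > 0"
    and "xt 1 \<in> C"
    and "\<And>t. t \<ge> 1 \<Longrightarrow> xs t \<in> subdiff (\<phi> t) (x t)"
    and "\<And>t. t \<ge> 1 \<Longrightarrow> xt (t + 1) = metric_proj C (xt t - \<eta> *\<^sub>R xs t)"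
    and "\<And>t. t \<ge> 1 \<Longrightarrow> x t = metric_proj C (xt t - \<eta> *\<^sub>R xh t)"
    and "T \<ge> 1"
    and "\<And>t. 1 \<le> t \<Longrightarrow> t \<le> T \<Longrightarrow> z t \<in> C"
  shows "(\<Sum>t=1..T. \<phi> t (x t)) - (\<Sum>t=1..T. \<phi> t (z t)) \<le>
    ereal (diameter C ^ 2 / (2 * \<eta>)
      + diameter C / \<eta> * (\<Sum>t=2..T. norm (z t - z (t - 1)))
      + \<eta> / 2 * (\<Sum>t=1..T. (norm (xs t - xh t))^2)
      - 1 / (2 * \<eta>) * (\<Sum>t=1..T. (norm (x t - xt t))^2))"
proof -
  note PC = proj_char[OF assms(1-3)]
  define \<rho> where "\<rho> = diameter C"
  have dist_le: "norm (u - v) \<le> \<rho>" if "u \<in> C" "v \<in> C" for u v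
    using diameter_bounded_bound[OF assms(4) that] by (simp add: \<rho>_def dist_norm)
  have yC: "xt t \<in> C" if "t \<ge> 1" for t
    using that
  proof (induction t rule: dec_induct)
    case base then show ?case using assms(8) by simp
  next
    case (step n) then show ?case using assms(10)[of n] PC by simp
  qed
  have step: "\<eta> * inner (xs t) (x t - z t) \<le> ((norm (xt t - z t))\<^sup>2 - (norm (xt (Suc t) - z t))\<^sup>2) / 2
           + \<eta>\<^sup>2 / 2 * (norm (xs t - xh t))\<^sup>2 - (norm (x t - xt t))\<^sup>2 / 2"
    if t: "1 \<le> t" "t \<le> T" for t
  proof (rule step_ineq[OF assms(7)])
    show "inner ((xt t - \<eta> *\<^sub>R xs t) - xt (Suc t)) (z t - xt (Suc t)) \<le> 0"
      using PC[of "xt t - \<eta> *\<^sub>R xs t"] assms(10)[OF t(1)] assms(13)[OF t] by simp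
    show "inner ((xt t - \<eta> *\<^sub>R xh t) - x t) (xt (Suc t) - x t) \<le> 0"
      using PC[of "xt t - \<eta> *\<^sub>R xh t"] assms(11)[OF t(1)] yC[of "Suc t"] by simp
  qed
  have tele: "(\<Sum>t=1..n. (norm (xt t - z t))\<^sup>2 - (norm (xt (Suc t) - z t))\<^sup>2)
      + (norm (xt (Suc n) - z n))\<^sup>2 \<le> \<rho>\<^sup>2 + 2 * \<rho> * (\<Sum>t=2..n. norm (z t - z (t - 1)))"
    if "1 \<le> n" "n \<le> T" for n
    using that
  proof (induction n rule: dec_induct)
    case base
    have "norm (xt 1 - z 1) \<le> \<rho>" using dist_le assms(8) assms(13)[of 1] assms(12) by simp
    hence "(norm (xt 1 - z 1))\<^sup>2 \<le> \<rho>\<^sup>2" by (simp add: power_mono)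
    then show ?case by simp
  next
    case (step n)
    have n: "n \<le> T" "Suc n \<le> T" "1 \<le> n" using step by auto
    let ?y = "xt (Suc n)"
    have yc: "?y \<in> C" using yC by simp
    have zc: "z n \<in> C" "z (Suc n) \<in> C" using assms(13) n by auto
    have "(norm (?y - z (Suc n)))\<^sup>2 - (norm (?y - z n))\<^sup>2 \<le> 2 * \<rho> * norm (z (Suc n) - z n)"
    proof (rule sqdiff)
      show "norm (?y - z (Suc n)) \<le> \<rho>" "norm (?y - z n) \<le> \<rho>" using dist_le yc zc by auto
      have "?y - z (Suc n) = (?y - z n) - (z (Suc n) - z n)" by simp
      then show "norm (?y - z (Suc n)) - norm (?y - z n) \<le> norm (z (Suc n) - z n)"
        by (metis norm_triangle_ineq4 diff_le_eq add.commute)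
    qed auto
    moreover have IH: "(\<Sum>t=1..n. (norm (xt t - z t))\<^sup>2 - (norm (xt (Suc t) - z t))\<^sup>2)
      + (norm (?y - z n))\<^sup>2 \<le> \<rho>\<^sup>2 + 2 * \<rho> * (\<Sum>t=2..n. norm (z t - z (t - 1)))"
      using step n by simp
    ultimately show ?case using n by (simp add: algebra_simps)
  qed
  have T1: "(\<Sum>t=1..T. (norm (xt t - z t))\<^sup>2 - (norm (xt (Suc t) - z t))\<^sup>2)
      \<le> \<rho>\<^sup>2 + 2 * \<rho> * (\<Sum>t=2..T. norm (z t - z (t - 1)))"
  proof -
    have "0 \<le> (norm (xt (Suc T) - z T))\<^sup>2" by simp
    thus ?thesis using tele[OF assms(12) order_refl] by linarith
  qed
  define L where "L = (\<Sum>t=1..T. inner (xs t) (x t - z t))"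
  have "\<eta> * L = (\<Sum>t=1..T. \<eta> * inner (xs t) (x t - z t))"
    by (simp add: L_def sum_distrib_left)
  also have "\<dots> \<le> (\<Sum>t=1..T. ((norm (xt t - z t))\<^sup>2 - (norm (xt (Suc t) - z t))\<^sup>2) / 2
           + \<eta>\<^sup>2 / 2 * (norm (xs t - xh t))\<^sup>2 - (norm (x t - xt t))\<^sup>2 / 2)"
    by (rule sum_mono) (use step in auto)
  also have "\<dots> = (\<Sum>t=1..T. (norm (xt t - z t))\<^sup>2 - (norm (xt (Suc t) - z t))\<^sup>2) / 2
           + \<eta>\<^sup>2 / 2 * (\<Sum>t=1..T. (norm (xs t - xh t))\<^sup>2) - (\<Sum>t=1..T. (norm (x t - xt t))\<^sup>2) / 2"
    by (simp add: sum.distrib sum_subtractf sum_distrib_left flip: sum_divide_distrib)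
  also have "\<dots> \<le> (\<rho>\<^sup>2 + 2 * \<rho> * (\<Sum>t=2..T. norm (z t - z (t - 1)))) / 2
           + \<eta>\<^sup>2 / 2 * (\<Sum>t=1..T. (norm (xs t - xh t))\<^sup>2) - (\<Sum>t=1..T. (norm (x t - xt t))\<^sup>2) / 2"
    using T1 by simp
  finally have Lb: "\<eta> * L \<le> \<dots>" .
  have Lb2: "L \<le> \<rho>\<^sup>2 / (2 * \<eta>) + \<rho> / \<eta> * (\<Sum>t=2..T. norm (z t - z (t - 1)))
      + \<eta> / 2 * (\<Sum>t=1..T. (norm (xs t - xh t))^2)
      - 1 / (2 * \<eta>) * (\<Sum>t=1..T. (norm (x t - xt t))^2)"
  proof -
    have "L = (\<eta> * L) / \<eta>" using assms(7) by simp
    also have "\<dots> \<le> ((\<rho>\<^sup>2 + 2 * \<rho> * (\<Sum>t=2..T. norm (z t - z (t - 1)))) / 2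
           + \<eta>\<^sup>2 / 2 * (\<Sum>t=1..T. (norm (xs t - xh t))\<^sup>2) - (\<Sum>t=1..T. (norm (x t - xt t))\<^sup>2) / 2) / \<eta>"
      by (rule divide_right_mono[OF Lb]) (use assms(7) in simp)
    also have "\<dots> = \<rho>\<^sup>2 / (2 * \<eta>) + \<rho> / \<eta> * (\<Sum>t=2..T. norm (z t - z (t - 1)))
      + \<eta> / 2 * (\<Sum>t=1..T. (norm (xs t - xh t))^2)
      - 1 / (2 * \<eta>) * (\<Sum>t=1..T. (norm (x t - xt t))^2)"
      using assms(7) by (simp add: field_simps power2_eq_square)
    finally show ?thesis .
  qed
  define a where "a t = real_of_ereal (\<phi> t (x t))" for t
  have fin: "\<phi> t (x t) = ereal (a t)" and sub: "\<phi> t (x t) + ereal (inner (xs t) (z t - x t)) \<le> \<phi> t (z t)"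
    if "1 \<le> t" for t
    using assms(9)[OF that] unfolding subdiff_def a_def
    by (auto simp: ereal_real)
  have S1: "(\<Sum>t=1..T. \<phi> t (x t)) = ereal (\<Sum>t=1..T. a t)"
    by (simp add: fin)
  have S2: "ereal (\<Sum>t=1..T. a t + inner (xs t) (z t - x t)) \<le> (\<Sum>t=1..T. \<phi> t (z t))"
  proof -
    have "ereal (\<Sum>t=1..T. a t + inner (xs t) (z t - x t)) = (\<Sum>t=1..T. ereal (a t + inner (xs t) (z t - x t)))"
      by simp
    also have "\<dots> \<le> (\<Sum>t=1..T. \<phi> t (z t))"
      by (rule sum_mono) (use sub fin in auto)
    finally show ?thesis .
  qed
  have "(\<Sum>t=1..T. \<phi> t (x t)) - (\<Sum>t=1..T. \<phi> t (z t))
      \<le> ereal (\<Sum>t=1..T. a t) - ereal (\<Sum>t=1..T. a t + inner (xs t) (z t - x t))"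
    unfolding S1 by (rule ereal_minus_mono[OF order_refl S2])
  also have "\<dots> = ereal L"
    by (simp add: L_def sum.distrib inner_diff_right sum_subtractf)
  also have "\<dots> \<le> ereal (diameter C ^ 2 / (2 * \<eta>)
      + diameter C / \<eta> * (\<Sum>t=2..T. norm (z t - z (t - 1)))
      + \<eta> / 2 * (\<Sum>t=1..T. (norm (xs t - xh t))^2)
      - 1 / (2 * \<eta>) * (\<Sum>t=1..T. (norm (x t - xt t))^2))"
    using Lb2 by (simp add: \<rho>_def)
  finally show ?thesis .
qed

end
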